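(* Let $(\Sigma,h)$ be an $n$-dimensional Riemannian manifold and $Y$ a vector field on $\Sigma$ with $|Y|^2\neq0$, and let $\widehat\nabla$ be the Levi-Civita connection of $h$. Then $D_{ij}:=|Y|^{-n-2}(Y_iY_j)_{\mathrm{tf}}$ is a TT tensor if and only if $Y^j(\widehat\nabla_{(i}Y_{j)})_{\mathrm{tf}}=0$. (In particular this holds if $Y$ is a conformal Killing vector field.)
   Context: $(T_{ij})_{\mathrm{tf}}$ denotes the $h$-trace-free part of a symmetric tensor, e.g. $(Y_iY_j)_{\mathrm{tf}}=Y_iY_j-\frac1n|Y|^2h_{ij}$. A TT tensor is a symmetric, trace-free, divergence-free $(0,2)$-tensor. *)

theory Defs
  imports "HOL-Analysis.Analysis"
begin

text \<open>Points of a coordinate chart are x :: real^'n,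
  so n = CARD('n). A metric is h :: real^'n => real^'n^'n (components h x $ i $ j),
  a vector field Y :: real^'n => real^'n has contravariant components Y x $ i,
  a (0,2)-tensor field is T :: real^'n => 'n => 'n => real.\<close>

definition pd :: "(real^'n \<Rightarrow> real) \<Rightarrow> 'n \<Rightarrow> real^'n \<Rightarrow> real" where
  "pd f k x = frechet_derivative f (at x) (axis k 1)"

definition dimn :: "'n::finite itself \<Rightarrow> real" where
  "dimn _ = real CARD('n)"

definition riemannian_metric_on :: "(real^'n::finite) set \<Rightarrow> (real^'n \<Rightarrow> real^'n^'n) \<Rightarrow> bool" where
  "riemannian_metric_on U h \<longleftrightarrow>
     (\<forall>x\<in>U. (\<forall>i j. h x $ i $ j = h x $ j $ i)
        \<and> (\<forall>v. v \<noteq> 0 \<longrightarrow> (\<Sum>i\<in>UNIV. \<Sum>j\<in>UNIV. h x $ i $ j * v $ i * v $ j) > 0)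
        \<and> (\<forall>i j. (\<lambda>y. h y $ i $ j) differentiable (at x)))"

definition vector_field_on :: "(real^'n::finite) set \<Rightarrow> (real^'n \<Rightarrow> real^'n) \<Rightarrow> bool" where
  "vector_field_on U Y \<longleftrightarrow> (\<forall>x\<in>U. \<forall>i. (\<lambda>y. Y y $ i) differentiable (at x))"

definition hinv :: "(real^'n::finite \<Rightarrow> real^'n^'n) \<Rightarrow> real^'n \<Rightarrow> 'n \<Rightarrow> 'n \<Rightarrow> real" where
  "hinv h x i j = matrix_inv (h x) $ i $ j"

definition christoffel :: "(real^'n::finite \<Rightarrow> real^'n^'n) \<Rightarrow> real^'n \<Rightarrow> 'n \<Rightarrow> 'n \<Rightarrow> 'n \<Rightarrow> real" where
  "christoffel h x k i j = (1/2) * (\<Sum>l\<in>UNIV. hinv h x k l *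
      (pd (\<lambda>y. h y $ j $ l) i x + pd (\<lambda>y. h y $ i $ l) j x - pd (\<lambda>y. h y $ i $ j) l x))"

definition lower :: "(real^'n::finite \<Rightarrow> real^'n^'n) \<Rightarrow> (real^'n \<Rightarrow> real^'n) \<Rightarrow> real^'n \<Rightarrow> 'n \<Rightarrow> real" where
  "lower h Y x i = (\<Sum>j\<in>UNIV. h x $ i $ j * Y x $ j)"

definition sqnorm :: "(real^'n::finite \<Rightarrow> real^'n^'n) \<Rightarrow> (real^'n \<Rightarrow> real^'n) \<Rightarrow> real^'n \<Rightarrow> real" where
  "sqnorm h Y x = (\<Sum>i\<in>UNIV. \<Sum>j\<in>UNIV. h x $ i $ j * Y x $ i * Y x $ j)"

definition cov1 :: "(real^'n::finite \<Rightarrow> real^'n^'n) \<Rightarrow> (real^'n \<Rightarrow> 'n \<Rightarrow> real) \<Rightarrow> real^'n \<Rightarrow> 'n \<Rightarrow> 'n \<Rightarrow> real" where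
  "cov1 h w x i j = pd (\<lambda>y. w y j) i x - (\<Sum>k\<in>UNIV. christoffel h x k i j * w x k)"

definition cov2 :: "(real^'n::finite \<Rightarrow> real^'n^'n) \<Rightarrow> (real^'n \<Rightarrow> 'n \<Rightarrow> 'n \<Rightarrow> real) \<Rightarrow> real^'n \<Rightarrow> 'n \<Rightarrow> 'n \<Rightarrow> 'n \<Rightarrow> real" where
  "cov2 h T x k i j = pd (\<lambda>y. T y i j) k x
     - (\<Sum>l\<in>UNIV. christoffel h x l k i * T x l j) - (\<Sum>l\<in>UNIV. christoffel h x l k j * T x i l)"

definition htrace :: "(real^'n::finite \<Rightarrow> real^'n^'n) \<Rightarrow> real^'n \<Rightarrow> ('n \<Rightarrow> 'n \<Rightarrow> real) \<Rightarrow> real" where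
  "htrace h x T = (\<Sum>i\<in>UNIV. \<Sum>j\<in>UNIV. hinv h x i j * T i j)"

definition tracefree :: "(real^'n::finite \<Rightarrow> real^'n^'n) \<Rightarrow> real^'n \<Rightarrow> ('n \<Rightarrow> 'n \<Rightarrow> real) \<Rightarrow> 'n \<Rightarrow> 'n \<Rightarrow> real" where
  "tracefree h x T i j = T i j - htrace h x T / dimn TYPE('n) * h x $ i $ j"

definition divergence :: "(real^'n::finite \<Rightarrow> real^'n^'n) \<Rightarrow> (real^'n \<Rightarrow> 'n \<Rightarrow> 'n \<Rightarrow> real) \<Rightarrow> real^'n \<Rightarrow> 'n \<Rightarrow> real" where
  "divergence h T x i = (\<Sum>j\<in>UNIV. \<Sum>k\<in>UNIV. hinv h x j k * cov2 h T x k i j)"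

definition TT_on :: "(real^'n::finite) set \<Rightarrow> (real^'n \<Rightarrow> real^'n^'n) \<Rightarrow> (real^'n \<Rightarrow> 'n \<Rightarrow> 'n \<Rightarrow> real) \<Rightarrow> bool" where
  "TT_on U h T \<longleftrightarrow> (\<forall>x\<in>U. (\<forall>i j. T x i j = T x j i) \<and> htrace h x (T x) = 0
                        \<and> (\<forall>i. divergence h T x i = 0))"

definition Dtensor :: "(real^'n::finite \<Rightarrow> real^'n^'n) \<Rightarrow> (real^'n \<Rightarrow> real^'n) \<Rightarrow> real^'n \<Rightarrow> 'n \<Rightarrow> 'n \<Rightarrow> real" where
  "Dtensor h Y x i j = sqrt (sqnorm h Y x) powr (- dimn TYPE('n) - 2) *
      tracefree h x (\<lambda>a b. lower h Y x a * lower h Y x b) i j"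

definition symcov :: "(real^'n::finite \<Rightarrow> real^'n^'n) \<Rightarrow> (real^'n \<Rightarrow> real^'n) \<Rightarrow> real^'n \<Rightarrow> 'n \<Rightarrow> 'n \<Rightarrow> real" where
  "symcov h Y x i j = (cov1 h (lower h Y) x i j + cov1 h (lower h Y) x j i) / 2"

end

theory Submission
  imports Defs
begin



lemma pd_has: "(f has_derivative f') (at x) \<Longrightarrow> pd f k x = f' (axis k 1)"
  by (simp add: pd_def frechet_derivative_at[symmetric])

lemma pd_cong:
  assumes "open U" "x \<in> U" "\<And>y. y \<in> U \<Longrightarrow> f y = g y"
  shows "pd f k x = pd g k x"
proof -
  have "(f has_derivative f') (at x) \<longleftrightarrow> (g has_derivative f') (at x)" for f'
    using has_derivative_transform_within_open[of f f' x UNIV U g]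
          has_derivative_transform_within_open[of g f' x UNIV U f] assms by auto
  then show ?thesis unfolding pd_def frechet_derivative_def by simp
qed

lemma fd: "f differentiable at x \<Longrightarrow> (f has_derivative frechet_derivative f (at x)) (at x)"
  using frechet_derivative_works by blast

lemma pd_mult:
  fixes f g :: "real^'n::finite \<Rightarrow> real"
  assumes "f differentiable at x" "g differentiable at x"
  shows "pd (\<lambda>y. f y * g y) k x = pd f k x * g x + f x * pd g k x"
  using pd_has[OF has_derivative_mult[OF fd[OF assms(1)] fd[OF assms(2)]]]
  by (simp add: pd_def algebra_simps)

lemma pd_add:
  fixes f g :: "real^'n::finite \<Rightarrow> real"
  assumes "f differentiable at x" "g differentiable at x"
  shows "pd (\<lambda>y. f y + g y) k x = pd f k x + pd g k x"
  using pd_has[OF has_derivative_add[OF fd[OF assms(1)] fd[OF assms(2)]]]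
  by (simp add: pd_def)

lemma pd_diff:
  fixes f g :: "real^'n::finite \<Rightarrow> real"
  assumes "f differentiable at x" "g differentiable at x"
  shows "pd (\<lambda>y. f y - g y) k x = pd f k x - pd g k x"
  using pd_has[OF has_derivative_diff[OF fd[OF assms(1)] fd[OF assms(2)]]]
  by (simp add: pd_def)

lemma pd_sum:
  fixes f :: "'a \<Rightarrow> real^'n::finite \<Rightarrow> real"
  assumes "finite A" "\<And>a. a \<in> A \<Longrightarrow> f a differentiable at x"
  shows "pd (\<lambda>y. \<Sum>a\<in>A. f a y) k x = (\<Sum>a\<in>A. pd (f a) k x)"
proof -
  have "((\<lambda>y. \<Sum>a\<in>A. f a y) has_derivative (\<lambda>v. \<Sum>a\<in>A. frechet_derivative (f a) (at x) v)) (at x)"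
    by (rule has_derivative_sum) (use fd assms in auto)
  from pd_has[OF this] show ?thesis by (simp add: pd_def)
qed

lemma pd_powr:
  fixes f :: "real^'n::finite \<Rightarrow> real"
  assumes "f differentiable at x" "f x > 0"
  shows "pd (\<lambda>y. f y powr a) k x = f x powr a * (pd f k x * a / f x)"
  using pd_has[OF has_derivative_powr[OF fd[OF assms(1)] has_derivative_const[of a] assms(2)]]
  by (simp add: pd_def)



lemma delta1[simp]:
  "(\<Sum>m\<in>(UNIV::'n::finite set). (if j = m then 1 else 0) * (X m::real)) = X j"
  "(\<Sum>m\<in>(UNIV::'n::finite set). (if m = j then 1 else 0) * (X m::real)) = X j"
  "(\<Sum>m\<in>(UNIV::'n::finite set). (X m::real) * (if j = m then 1 else 0)) = X j"
  "(\<Sum>m\<in>(UNIV::'n::finite set). (X m::real) * (if m = j then 1 else 0)) = X j"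
proof -
  have a: "(\<Sum>m\<in>(UNIV::'n set). (if j = m then 1 else 0) * (X m::real)) = (\<Sum>m\<in>UNIV. if m = j then X m else 0)"
    by (intro sum.cong) auto
  have b: "(\<Sum>m\<in>(UNIV::'n set). (if m = j then 1 else 0) * (X m::real)) = (\<Sum>m\<in>UNIV. if m = j then X m else 0)"
    by (intro sum.cong) auto
  have c: "(\<Sum>m\<in>(UNIV::'n set). (X m::real) * (if j = m then 1 else 0)) = (\<Sum>m\<in>UNIV. if m = j then X m else 0)"
    by (intro sum.cong) auto
  have d: "(\<Sum>m\<in>(UNIV::'n set). (X m::real) * (if m = j then 1 else 0)) = (\<Sum>m\<in>UNIV. if m = j then X m else 0)"
    by (intro sum.cong) auto
  show "(\<Sum>m\<in>(UNIV::'n::finite set). (if j = m then 1 else 0) * (X m::real)) = X j"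
    "(\<Sum>m\<in>(UNIV::'n::finite set). (if m = j then 1 else 0) * (X m::real)) = X j"
    "(\<Sum>m\<in>(UNIV::'n::finite set). (X m::real) * (if j = m then 1 else 0)) = X j"
    "(\<Sum>m\<in>(UNIV::'n::finite set). (X m::real) * (if m = j then 1 else 0)) = X j"
    using a b c d by simp_all
qed

lemma if01_simps:
  "(x::real) * (if P then 1 else 0) = (if P then x else 0)"
  "(if P then 1 else 0) * (x::real) = (if P then x else 0)"
  "(if P then (x::real) else 0) / c = (if P then x / c else 0)"
  "c * (if P then (x::real) else 0) = (if P then c * x else 0)"
  "(if P then (x::real) else 0) * c = (if P then x * c else 0)"
  by auto

lemma contr1:
  fixes g G :: "'n::finite \<Rightarrow> 'n \<Rightarrow> real"
  assumes gG: "\<And>i k. (\<Sum>j\<in>UNIV. g i j * G j k) = (if i = k then 1 else 0)"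
    and gs: "\<And>i j. g i j = g j i"
  shows "(\<Sum>l\<in>UNIV. (\<Sum>m\<in>UNIV. G l m * X m) * g l j) = X j"
proof -
  have "(\<Sum>l\<in>UNIV. (\<Sum>m\<in>UNIV. G l m * X m) * g l j) = (\<Sum>l\<in>UNIV. \<Sum>m\<in>UNIV. g j l * G l m * X m)"
    unfolding sum_distrib_right sum_distrib_left by (intro sum.cong refl) (simp add: gs[of j] mult_ac)
  also have "\<dots> = (\<Sum>m\<in>UNIV. (\<Sum>l\<in>UNIV. g j l * G l m) * X m)"
    by (subst sum.swap) (simp add: sum_distrib_right)
  also have "\<dots> = X j" by (simp add: gG)
  finally show ?thesis .
qed

lemma compat:
  fixes g G :: "'n::finite \<Rightarrow> 'n \<Rightarrow> real" and dh :: "'n \<Rightarrow> 'n \<Rightarrow> 'n \<Rightarrow> real"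
  assumes gG: "\<And>i k. (\<Sum>j\<in>UNIV. g i j * G j k) = (if i = k then 1 else 0)"
    and gs: "\<And>i j. g i j = g j i"
    and dhs: "\<And>k i j. dh k i j = dh k j i"
    and Gam: "\<And>l k i. Gam l k i = 1/2 * (\<Sum>m\<in>UNIV. G l m * (dh k i m + dh i k m - dh m k i))"
  shows "dh k i j = (\<Sum>l\<in>UNIV. Gam l k i * g l j) + (\<Sum>l\<in>UNIV. Gam l k j * g i l)"
proof -
  have e: "(\<Sum>l\<in>UNIV. Gam l k i * g l j) = 1/2 * (dh k i j + dh i k j - dh j k i)" for k i j
  proof -
    have "(\<Sum>l\<in>UNIV. Gam l k i * g l j) = 1/2 * (\<Sum>l\<in>UNIV. (\<Sum>m\<in>UNIV. G l m * (dh k i m + dh i k m - dh m k i)) * g l j)"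
      unfolding Gam sum_distrib_right sum_distrib_left by (intro sum.cong refl) (simp add: mult_ac)
    also have "\<dots> = 1/2 * (dh k i j + dh i k j - dh j k i)"
      using contr1[OF gG gs, of "\<lambda>m. dh k i m + dh i k m - dh m k i" j] by simp
    finally show ?thesis .
  qed
  have e2: "(\<Sum>l\<in>UNIV. Gam l k j * g i l) = 1/2 * (dh k j i + dh j k i - dh i k j)"
    using e[of k j i] by (simp add: gs)
  show ?thesis using e[of k i j] e2 dhs[of k i j] dhs[of i k j] dhs[of j k i] by simp
qed

lemma main_alg:
  fixes g G :: "'n::finite \<Rightarrow> 'n \<Rightarrow> real" and dh :: "'n \<Rightarrow> 'n \<Rightarrow> 'n \<Rightarrow> real"
    and Y :: "'n \<Rightarrow> real" and dY :: "'n \<Rightarrow> 'n \<Rightarrow> real" and nn phi f s tr :: real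
  assumes gG: "\<And>i k. (\<Sum>j\<in>UNIV. g i j * G j k) = (if i = k then 1 else 0)"
    and Gg: "\<And>i k. (\<Sum>j\<in>UNIV. G i j * g j k) = (if i = k then 1 else 0)"
    and gs: "\<And>i j. g i j = g j i"
    and Gs: "\<And>i j. G i j = G j i"
    and dhs: "\<And>k i j. dh k i j = dh k j i"
    and Gam: "\<And>l k i. Gam l k i = 1/2 * (\<Sum>m\<in>UNIV. G l m * (dh k i m + dh i k m - dh m k i))"
    and L: "\<And>i. L i = (\<Sum>j\<in>UNIV. g i j * Y j)"
    and f: "f = (\<Sum>i\<in>UNIV. \<Sum>j\<in>UNIV. g i j * Y i * Y j)"
    and dL: "\<And>k j. dL k j = (\<Sum>m\<in>UNIV. dh k j m * Y m + g j m * dY k m)"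
    and df: "\<And>k. df k = (\<Sum>i\<in>UNIV. \<Sum>j\<in>UNIV. dh k i j * Y i * Y j + g i j * dY k i * Y j + g i j * Y i * dY k j)"
    and E: "\<And>i j. E i j = L i * L j - f / nn * g i j"
    and dE: "\<And>k i j. dE k i j = dL k i * L j + L i * dL k j - (df k / nn * g i j + f / nn * dh k i j)"
    and dphi: "\<And>k. dphi k = phi * (df k * s / f)"
    and s: "s = (- nn - 2) / 2"
    and cov: "\<And>k i j. cov k i j = dphi k * E i j + phi * dE k i j
        - (\<Sum>l\<in>UNIV. Gam l k i * (phi * E l j)) - (\<Sum>l\<in>UNIV. Gam l k j * (phi * E i l))"
    and dv: "\<And>i. dv i = (\<Sum>j\<in>UNIV. \<Sum>k\<in>UNIV. G j k * cov k i j)"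
    and N: "\<And>i j. N i j = dL i j - (\<Sum>k\<in>UNIV. Gam k i j * L k)"
    and S: "\<And>i j. S i j = (N i j + N j i) / 2"
    and tr: "tr = (\<Sum>i\<in>UNIV. \<Sum>j\<in>UNIV. G i j * S i j)"
    and C: "\<And>i. C i = (\<Sum>j\<in>UNIV. Y j * (S i j - tr / nn * g i j))"
    and fnz: "f \<noteq> 0" and phinz: "phi \<noteq> 0" and nn: "nn > 0"
  shows "(\<forall>i. dv i = 0) \<longleftrightarrow> (\<forall>i. C i = 0)"
proof -
  have comp: "\<And>k i j. dh k i j = (\<Sum>l\<in>UNIV. Gam l k i * g l j) + (\<Sum>l\<in>UNIV. Gam l k j * g i l)"
    using compat[OF gG gs dhs Gam] by blast
  have dLN: "\<And>k j. dL k j = N k j + (\<Sum>l\<in>UNIV. Gam l k j * L l)" by (simp add: N)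
  have t1: "(\<Sum>l\<in>UNIV. Gam l k i * (phi * E l j)) =
      phi * ((\<Sum>l\<in>UNIV. Gam l k i * L l) * L j - f/nn * (\<Sum>l\<in>UNIV. Gam l k i * g l j))" for k i j
    unfolding E by (simp add: sum_distrib_left sum_distrib_right sum_subtractf right_diff_distrib mult_ac)
  have t2: "(\<Sum>l\<in>UNIV. Gam l k j * (phi * E i l)) =
      phi * (L i * (\<Sum>l\<in>UNIV. Gam l k j * L l) - f/nn * (\<Sum>l\<in>UNIV. Gam l k j * g i l))" for k i j
    unfolding E by (simp add: sum_distrib_left sum_distrib_right sum_subtractf right_diff_distrib mult_ac)
  have cov2: "cov k i j = dphi k * E i j + phi * (N k i * L j + L i * N k j - df k / nn * g i j)" for k i j
    unfolding cov t1 t2 dE dLN comp[of k i j] by (simp add: algebra_simps)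
  define A where "A k = (\<Sum>i\<in>UNIV. \<Sum>j\<in>UNIV. dh k i j * Y i * Y j)" for k
  define B' where "B' k = (\<Sum>i\<in>UNIV. \<Sum>j\<in>UNIV. g i j * Y i * dY k j)" for k
  define T where "T k = (\<Sum>i\<in>UNIV. Y i * (\<Sum>l\<in>UNIV. Gam l k i * L l))" for k
  have A1: "(\<Sum>i\<in>UNIV. \<Sum>j\<in>UNIV. (\<Sum>l\<in>UNIV. Gam l k i * g l j) * Y i * Y j) = T k" for k
  proof -
    have "(\<Sum>i\<in>UNIV. \<Sum>j\<in>UNIV. (\<Sum>l\<in>UNIV. Gam l k i * g l j) * Y i * Y j)
        = (\<Sum>i\<in>UNIV. \<Sum>j\<in>UNIV. \<Sum>l\<in>UNIV. Y i * Gam l k i * g l j * Y j)"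
      unfolding sum_distrib_right by (simp add: mult_ac)
    also have "\<dots> = (\<Sum>i\<in>UNIV. \<Sum>l\<in>UNIV. \<Sum>j\<in>UNIV. Y i * Gam l k i * g l j * Y j)"
      by (rule sum.cong[OF refl], rule sum.swap)
    also have "\<dots> = T k"
      unfolding T_def L by (simp add: sum_distrib_left mult_ac)
    finally show ?thesis .
  qed
  have A2: "(\<Sum>i\<in>UNIV. \<Sum>j\<in>UNIV. (\<Sum>l\<in>UNIV. Gam l k j * g i l) * Y i * Y j) = T k" for k
  proof -
    have "(\<Sum>i\<in>UNIV. \<Sum>j\<in>UNIV. (\<Sum>l\<in>UNIV. Gam l k j * g i l) * Y i * Y j)
       = (\<Sum>j\<in>UNIV. \<Sum>i\<in>UNIV. (\<Sum>l\<in>UNIV. Gam l k j * g i l) * Y i * Y j)"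
      by (rule sum.swap)
    also have "\<dots> = (\<Sum>i\<in>UNIV. \<Sum>j\<in>UNIV. (\<Sum>l\<in>UNIV. Gam l k i * g l j) * Y i * Y j)"
      by (intro sum.cong refl) (simp add: gs mult_ac)
    finally show ?thesis using A1 by simp
  qed
  have AT: "A k = 2 * T k" for k
  proof -
    have "A k = (\<Sum>i\<in>UNIV. \<Sum>j\<in>UNIV. (\<Sum>l\<in>UNIV. Gam l k i * g l j) * Y i * Y j
        + (\<Sum>l\<in>UNIV. Gam l k j * g i l) * Y i * Y j)"
      unfolding A_def by (intro sum.cong refl) (subst comp, simp add: algebra_simps)
    also have "\<dots> = 2 * T k" by (simp add: sum.distrib A1 A2)
    finally show ?thesis .
  qed
  have dfA: "df k = A k + 2 * B' k" for k
  proof -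
    have m: "(\<Sum>i\<in>UNIV. \<Sum>j\<in>UNIV. g i j * dY k i * Y j) = B' k"
    proof -
      have "(\<Sum>i\<in>UNIV. \<Sum>j\<in>UNIV. g i j * dY k i * Y j) = (\<Sum>j\<in>UNIV. \<Sum>i\<in>UNIV. g i j * dY k i * Y j)"
        by (rule sum.swap)
      also have "\<dots> = B' k" unfolding B'_def by (intro sum.cong refl) (simp add: gs mult_ac)
      finally show ?thesis .
    qed
    show ?thesis unfolding df A_def B'_def using m[unfolded B'_def] by (simp add: sum.distrib)
  qed
  have YdL: "(\<Sum>j\<in>UNIV. Y j * dL k j) = A k + B' k" for k
    unfolding dL A_def B'_def by (simp add: sum_distrib_left sum.distrib algebra_simps)
  define P where "P k = (\<Sum>j\<in>UNIV. Y j * N k j)" for k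
  have dfP: "df k = 2 * P k" for k
  proof -
    have "P k = (\<Sum>j\<in>UNIV. Y j * dL k j) - T k"
      unfolding P_def N T_def by (simp add: right_diff_distrib sum_subtractf)
    then show ?thesis using YdL AT dfA by simp
  qed
  have contrL: "(\<Sum>j\<in>UNIV. G j k * L j) = Y k" for k
  proof -
    have "(\<Sum>j\<in>UNIV. G j k * L j) = (\<Sum>j\<in>UNIV. \<Sum>m\<in>UNIV. G k j * g j m * Y m)"
      unfolding L sum_distrib_left by (simp add: Gs[of _ k] mult_ac)
    also have "\<dots> = (\<Sum>m\<in>UNIV. (\<Sum>j\<in>UNIV. G k j * g j m) * Y m)"
      by (subst sum.swap) (simp add: sum_distrib_right)
    also have "\<dots> = Y k" by (simp add: Gg)
    finally show ?thesis .
  qed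
  have contrg: "(\<Sum>j\<in>UNIV. G j k * g i j) = (if i = k then 1 else 0)" for i k
    using gG[of i k] by (simp add: mult.commute)
  have contrE: "(\<Sum>j\<in>UNIV. G j k * E i j) = L i * Y k - f / nn * (if i = k then 1 else 0)" for i k
  proof -
    have "(\<Sum>j\<in>UNIV. G j k * E i j) = L i * (\<Sum>j\<in>UNIV. G j k * L j) - f / nn * (\<Sum>j\<in>UNIV. G j k * g i j)"
      unfolding E by (simp add: right_diff_distrib sum_subtractf sum_distrib_left mult_ac)
    then show ?thesis using contrL contrg by simp
  qed
  define tr' where "tr' = (\<Sum>k\<in>UNIV. \<Sum>j\<in>UNIV. G j k * N k j)"
  have trtr: "tr = tr'"
  proof -
    have a: "(\<Sum>i\<in>UNIV. \<Sum>j\<in>UNIV. G i j * N i j) = tr'"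
      unfolding tr'_def by (intro sum.cong refl) (simp add: Gs)
    have b: "(\<Sum>i\<in>UNIV. \<Sum>j\<in>UNIV. G i j * N j i) = tr'"
      unfolding tr'_def by (subst sum.swap) simp
    have "tr = (\<Sum>i\<in>UNIV. \<Sum>j\<in>UNIV. G i j * N i j) / 2 + (\<Sum>i\<in>UNIV. \<Sum>j\<in>UNIV. G i j * N j i) / 2"
      unfolding tr S by (simp add: distrib_left add_divide_distrib sum.distrib sum_divide_distrib)
    then show ?thesis using a b by simp
  qed
  define Q where "Q i = (\<Sum>k\<in>UNIV. Y k * N k i)" for i
  have dvk: "dv i = (\<Sum>k\<in>UNIV. dphi k * Y k) * L i - f / nn * dphi i + phi * (Q i + L i * tr - df i / nn)" for i
  proof -
    have inner: "(\<Sum>j\<in>UNIV. G j k * cov k i j) = dphi k * (L i * Y k - f / nn * (if i = k then 1 else 0))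
       + phi * (N k i * Y k + L i * (\<Sum>j\<in>UNIV. G j k * N k j) - df k / nn * (if i = k then 1 else 0))" for k
    proof -
      have "(\<Sum>j\<in>UNIV. G j k * cov k i j) = dphi k * (\<Sum>j\<in>UNIV. G j k * E i j)
         + phi * (N k i * (\<Sum>j\<in>UNIV. G j k * L j) + L i * (\<Sum>j\<in>UNIV. G j k * N k j) - df k / nn * (\<Sum>j\<in>UNIV. G j k * g i j))"
        unfolding cov2 by (simp add: sum_distrib_left sum.distrib sum_subtractf algebra_simps)
      then show ?thesis using contrE contrL contrg by simp
    qed
    have "dv i = (\<Sum>k\<in>UNIV. \<Sum>j\<in>UNIV. G j k * cov k i j)" unfolding dv by (rule sum.swap)
    also have "\<dots> = (\<Sum>k\<in>UNIV. dphi k * Y k) * L i - f / nn * dphi i + phi * (Q i + L i * tr' - df i / nn)"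
      unfolding inner Q_def tr'_def
      by (simp add: if01_simps sum.delta sum.delta' sum.distrib sum_subtractf sum_distrib_left sum_distrib_right algebra_simps)
    finally show ?thesis using trtr by simp
  qed
  define B where "B = (\<Sum>k\<in>UNIV. Y k * P k)"
  have sdphi: "(\<Sum>k\<in>UNIV. dphi k * Y k) = phi * s / f * (2 * B)"
    unfolding B_def dphi dfP by (simp add: sum_distrib_left mult_ac)
  have YQ: "(\<Sum>i\<in>UNIV. Y i * Q i) = B"
    unfolding B_def Q_def P_def sum_distrib_left by (subst sum.swap) (simp add: mult_ac)
  have YL: "(\<Sum>i\<in>UNIV. Y i * L i) = f"
    unfolding f L sum_distrib_left by (simp add: mult_ac)
  have Ci: "C i = (P i + Q i) / 2 - tr / nn * L i" for i
  proof -
    have "C i = ((\<Sum>j\<in>UNIV. Y j * N i j) + (\<Sum>j\<in>UNIV. Y j * N j i)) / 2 - tr / nn * (\<Sum>j\<in>UNIV. g i j * Y j)"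
      unfolding C S by (simp add: sum_subtractf right_diff_distrib distrib_left add_divide_distrib sum.distrib sum_divide_distrib sum_distrib_left mult_ac)
    then show ?thesis unfolding P_def Q_def L by (simp add: mult_ac)
  qed
  define Z where "Z = (\<Sum>i\<in>UNIV. Y i * C i)"
  have Zv: "Z = B - tr / nn * f"
  proof -
    have "Z = ((\<Sum>i\<in>UNIV. Y i * P i) + (\<Sum>i\<in>UNIV. Y i * Q i)) / 2 - tr / nn * (\<Sum>i\<in>UNIV. Y i * L i)"
      unfolding Z_def Ci by (simp add: sum_subtractf right_diff_distrib distrib_left add_divide_distrib sum.distrib sum_divide_distrib sum_distrib_left mult_ac)
    then show ?thesis using YQ YL unfolding B_def by simp
  qed
  have dvC: "dv i = phi * (2 * C i - (nn + 2) * L i * Z / f)" for i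
    unfolding dvk sdphi unfolding Ci Zv dphi dfP s using fnz nn
    by (simp add: field_simps)
  show ?thesis
  proof
    assume h: "\<forall>i. dv i = 0"
    have e: "2 * C i = (nn + 2) * L i * Z / f" for i
      using h dvC[of i] phinz by simp
    have "2 * Z = (\<Sum>i\<in>UNIV. Y i * (2 * C i))"
      unfolding Z_def sum_distrib_left by (simp add: mult_ac)
    also have "\<dots> = (\<Sum>i\<in>UNIV. (nn + 2) * Z / f * (Y i * L i))"
      unfolding e by (simp add: mult_ac)
    also have "\<dots> = (nn + 2) * Z / f * (\<Sum>i\<in>UNIV. Y i * L i)"
      by (simp add: sum_distrib_left)
    finally have "2 * Z = (nn + 2) * Z / f * (\<Sum>i\<in>UNIV. Y i * L i)" .
    then have "2 * Z = (nn + 2) * Z" using YL fnz by simp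
    then have "Z = 0" using nn by (simp add: algebra_simps)
    then show "\<forall>i. C i = 0" using e fnz by simp
  next
    assume "\<forall>i. C i = 0"
    then have "Z = 0" unfolding Z_def by simp
    then show "\<forall>i. dv i = 0" using dvC \<open>\<forall>i. C i = 0\<close> by simp
  qed
qed



lemma metric_inv:
  fixes h :: "real^'n::finite \<Rightarrow> real^'n^'n"
  assumes "riemannian_metric_on U h" "x \<in> U"
  shows "\<And>i k. (\<Sum>j\<in>UNIV. h x$i$j * hinv h x j k) = (if i = k then 1 else 0)"
    and "\<And>i k. (\<Sum>j\<in>UNIV. hinv h x i j * h x$j$k) = (if i = k then 1 else 0)"
    and "\<And>i j. hinv h x i j = hinv h x j i"
    and "\<And>i j. h x $ i $ j = h x $ j $ i"
proof -
  let ?A = "h x"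
  have sym: "\<And>i j. h x $ i $ j = h x $ j $ i" and pos: "\<And>v. v \<noteq> 0 \<Longrightarrow> (\<Sum>i\<in>UNIV. \<Sum>j\<in>UNIV. h x $ i $ j * v $ i * v $ j) > 0"
    using assms unfolding riemannian_metric_on_def by auto
  then show "\<And>i j. h x $ i $ j = h x $ j $ i" by blast
  have ker: "\<forall>v. ?A *v v = 0 \<longrightarrow> v = 0"
  proof (intro allI impI)
    fix v assume v: "?A *v v = 0"
    have "(\<Sum>i\<in>UNIV. \<Sum>j\<in>UNIV. h x $ i $ j * v $ i * v $ j) = (\<Sum>i\<in>UNIV. v $ i * (?A *v v) $ i)"
      by (simp add: matrix_vector_mult_def) (simp add: sum_distrib_left mult_ac)
    also have "\<dots> = 0" using v by simp
    finally show "v = 0" using pos by fastforce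
  qed
  then have "invertible ?A"
    using matrix_left_invertible_ker invertible_left_inverse by blast
  then have inv: "?A ** matrix_inv ?A = mat 1 \<and> matrix_inv ?A ** ?A = mat 1"
    unfolding invertible_def matrix_inv_def by (rule someI_ex)
  show gG: "(\<Sum>j\<in>UNIV. h x$i$j * hinv h x j k) = (if i = k then 1 else 0)" for i k
  proof -
    have "(?A ** matrix_inv ?A) $ i $ k = mat 1 $ i $ k" using inv by simp
    then show ?thesis unfolding hinv_def matrix_matrix_mult_def mat_def by simp
  qed
  show Gg: "(\<Sum>j\<in>UNIV. hinv h x i j * h x$j$k) = (if i = k then 1 else 0)" for i k
  proof -
    have "(matrix_inv ?A ** ?A) $ i $ k = mat 1 $ i $ k" using inv by simp
    then show ?thesis unfolding hinv_def matrix_matrix_mult_def mat_def by simp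
  qed
  have tA: "transpose ?A = ?A" using sym by (simp add: transpose_def vec_eq_iff)
  have "transpose (matrix_inv ?A) ** ?A = mat 1"
    using inv tA matrix_transpose_mul[of ?A "matrix_inv ?A"] transpose_mat[of 1] by simp
  then have "transpose (matrix_inv ?A) = matrix_inv ?A"
  proof -
    have "transpose (matrix_inv ?A) = transpose (matrix_inv ?A) ** (?A ** matrix_inv ?A)"
      using inv by simp
    also have "\<dots> = (transpose (matrix_inv ?A) ** ?A) ** matrix_inv ?A"
      by (simp add: matrix_mul_assoc)
    also have "\<dots> = matrix_inv ?A" using \<open>transpose (matrix_inv ?A) ** ?A = mat 1\<close> by simp
    finally show ?thesis .
  qed
  then have "transpose (matrix_inv ?A) $ j $ i = matrix_inv ?A $ j $ i" for i j by simp
  then show "hinv h x i j = hinv h x j i" for i j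
    unfolding hinv_def by (simp add: transpose_def)
qed

lemma pd_cdiv:
  fixes f :: "real^'n::finite \<Rightarrow> real"
  assumes "f differentiable at x"
  shows "pd (\<lambda>y. f y / c) k x = pd f k x / c"
proof -
  have "((\<lambda>y. f y / c) has_derivative (\<lambda>v. frechet_derivative f (at x) v / c)) (at x)"
    using has_derivative_mult_left[OF fd[OF assms], of "1/c"] by simp
  from pd_has[OF this] show ?thesis by (simp add: pd_def)
qed

lemma htrace_LL:
  fixes h :: "real^'n::finite \<Rightarrow> real^'n^'n"
  assumes "riemannian_metric_on U h" "y \<in> U"
  shows "htrace h y (\<lambda>a b. lower h Y y a * lower h Y y b) = sqnorm h Y y"
proof -
  note mi = metric_inv[OF assms]
  have cL: "(\<Sum>a\<in>UNIV. hinv h y a b * lower h Y y a) = Y y $ b" for b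
  proof -
    have "(\<Sum>a\<in>UNIV. hinv h y a b * lower h Y y a) = (\<Sum>a\<in>UNIV. \<Sum>m\<in>UNIV. hinv h y b a * h y $ a $ m * Y y $ m)"
      unfolding lower_def sum_distrib_left by (simp add: mi(3)[of _ b] mult_ac)
    also have "\<dots> = (\<Sum>m\<in>UNIV. (\<Sum>a\<in>UNIV. hinv h y b a * h y $ a $ m) * Y y $ m)"
      by (subst sum.swap) (simp add: sum_distrib_right)
    also have "\<dots> = Y y $ b" by (simp add: mi(2))
    finally show ?thesis .
  qed
  have "htrace h y (\<lambda>a b. lower h Y y a * lower h Y y b)
      = (\<Sum>b\<in>UNIV. (\<Sum>a\<in>UNIV. hinv h y a b * lower h Y y a) * lower h Y y b)"
    unfolding htrace_def sum_distrib_right by (subst sum.swap) (simp add: mult_ac)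
  also have "\<dots> = (\<Sum>b\<in>UNIV. Y y $ b * lower h Y y b)" by (simp add: cL)
  also have "\<dots> = sqnorm h Y y"
    unfolding sqnorm_def lower_def sum_distrib_left by (simp add: mult_ac)
  finally show ?thesis .
qed



theorem lemma1:
  fixes U :: "(real^'n::finite) set"
    and h :: "real^'n \<Rightarrow> real^'n^'n"
    and Y :: "real^'n \<Rightarrow> real^'n"
  assumes "open U"
    and "riemannian_metric_on U h"
    and "vector_field_on U Y"
    and "\<forall>x\<in>U. sqnorm h Y x \<noteq> 0"
  shows "TT_on U h (Dtensor h Y) \<longleftrightarrow>
         (\<forall>x\<in>U. \<forall>i. (\<Sum>j\<in>UNIV. Y x $ j * tracefree h x (symcov h Y x) i j) = 0)"
proof -
  have hd: "\<And>x i j. x \<in> U \<Longrightarrow> (\<lambda>y. h y $ i $ j) differentiable at x"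
    using assms(2) unfolding riemannian_metric_on_def by blast
  have Yd: "\<And>x i. x \<in> U \<Longrightarrow> (\<lambda>y. Y y $ i) differentiable at x"
    using assms(3) unfolding vector_field_on_def by blast
  have Ld: "\<And>x i. x \<in> U \<Longrightarrow> (\<lambda>y. lower h Y y i) differentiable at x"
    unfolding lower_def using hd Yd by (intro differentiable_sum) auto
  have hYd: "\<And>x i j. x \<in> U \<Longrightarrow> (\<lambda>y. h y $ i $ j * Y y $ i) differentiable at x"
    using hd Yd by (intro differentiable_mult) auto
  have fd': "\<And>x. x \<in> U \<Longrightarrow> sqnorm h Y differentiable at x"
  proof -
    fix x assume x: "x \<in> U"
    have "(\<lambda>y. \<Sum>i\<in>UNIV. \<Sum>j\<in>UNIV. h y $ i $ j * Y y $ i * Y y $ j) differentiable at x"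
      by (intro differentiable_sum ballI finite_UNIV differentiable_mult[OF hYd[OF x] Yd[OF x]]) auto
    then show "sqnorm h Y differentiable at x" unfolding sqnorm_def[abs_def] by simp
  qed
  have fpos: "\<And>x. x \<in> U \<Longrightarrow> sqnorm h Y x > 0"
  proof -
    fix x assume x: "x \<in> U"
    have "Y x \<noteq> 0" using assms(4) x unfolding sqnorm_def by fastforce
    then show "sqnorm h Y x > 0" using assms(2) x unfolding riemannian_metric_on_def sqnorm_def by blast
  qed
  define nn where "nn = dimn TYPE('n)"
  have nn: "nn > 0" unfolding nn_def dimn_def by simp
  define a where "a = (- nn - 2) / 2"
  define phi where "phi y = sqnorm h Y y powr a" for y
  have phid: "\<And>x. x \<in> U \<Longrightarrow> phi differentiable at x"
    unfolding phi_def differentiable_def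
    using has_derivative_powr[OF fd[OF fd'] has_derivative_const[of a]] fpos by blast
  define EE where "EE y i j = lower h Y y i * lower h Y y j - sqnorm h Y y / nn * h y $ i $ j" for y i j
  have Dloc: "\<And>y i j. y \<in> U \<Longrightarrow> Dtensor h Y y i j = phi y * EE y i j"
  proof -
    fix y i j assume y: "y \<in> U"
    have "sqrt (sqnorm h Y y) powr (- nn - 2) = phi y"
      unfolding phi_def a_def using fpos[OF y]
      by (simp add: powr_half_sqrt[symmetric] powr_powr)
    then show "Dtensor h Y y i j = phi y * EE y i j"
      unfolding Dtensor_def tracefree_def EE_def htrace_LL[OF assms(2) y] nn_def by simp
  qed
  have EEd: "\<And>x i j. x \<in> U \<Longrightarrow> (\<lambda>y. EE y i j) differentiable at x"
    unfolding EE_def using Ld fd' hd nn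
    by (intro differentiable_diff differentiable_mult differentiable_divide) auto
  have pointwise: "(\<forall>i. divergence h (Dtensor h Y) x i = 0) \<longleftrightarrow>
      (\<forall>i. (\<Sum>j\<in>UNIV. Y x $ j * tracefree h x (symcov h Y x) i j) = 0)" if x: "x \<in> U" for x
  proof -
    note mi = metric_inv[OF assms(2) x]
    note hdx = hd[OF x] and Ydx = Yd[OF x] and Ldx = Ld[OF x] and fdx = fd'[OF x]
    define dh where "dh k i j = pd (\<lambda>y. h y $ i $ j) k x" for k i j
    define dY where "dY k j = pd (\<lambda>y. Y y $ j) k x" for k j
    have dhs: "dh k i j = dh k j i" for k i j
    proof -
      have "\<And>y. y \<in> U \<Longrightarrow> h y $ i $ j = h y $ j $ i"
        using assms(2) unfolding riemannian_metric_on_def by blast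
      then show ?thesis unfolding dh_def by (rule pd_cong[OF assms(1) x])
    qed
    have Gam: "christoffel h x l k i = 1/2 * (\<Sum>m\<in>UNIV. hinv h x l m * (dh k i m + dh i k m - dh m k i))" for l k i
      by (simp add: christoffel_def dh_def)
    have Lx: "lower h Y x i = (\<Sum>j\<in>UNIV. h x $ i $ j * Y x $ j)" for i by (simp add: lower_def)
    have fx: "sqnorm h Y x = (\<Sum>i\<in>UNIV. \<Sum>j\<in>UNIV. h x $ i $ j * Y x $ i * Y x $ j)" by (simp add: sqnorm_def)
    have dL: "pd (\<lambda>y. lower h Y y j) k x = (\<Sum>m\<in>UNIV. dh k j m * Y x $ m + h x $ j $ m * dY k m)" for k j
    proof -
      have "pd (\<lambda>y. lower h Y y j) k x = pd (\<lambda>y. \<Sum>m\<in>UNIV. h y $ j $ m * Y y $ m) k x"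
        by (simp add: lower_def)
      also have "\<dots> = (\<Sum>m\<in>UNIV. pd (\<lambda>y. h y $ j $ m * Y y $ m) k x)"
        by (rule pd_sum) (auto simp: hdx Ydx)
      also have "\<dots> = (\<Sum>m\<in>UNIV. dh k j m * Y x $ m + h x $ j $ m * dY k m)"
        by (simp add: pd_mult hdx Ydx dh_def dY_def)
      finally show ?thesis .
    qed
    have df: "pd (sqnorm h Y) k x = (\<Sum>i\<in>UNIV. \<Sum>j\<in>UNIV. dh k i j * Y x $ i * Y x $ j
        + h x $ i $ j * dY k i * Y x $ j + h x $ i $ j * Y x $ i * dY k j)" for k
    proof -
      have e: "sqnorm h Y = (\<lambda>y. \<Sum>i\<in>UNIV. \<Sum>j\<in>UNIV. h y $ i $ j * Y y $ i * Y y $ j)"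
        by (rule ext) (simp add: sqnorm_def)
      have "pd (sqnorm h Y) k x = (\<Sum>i\<in>UNIV. pd (\<lambda>y. \<Sum>j\<in>UNIV. h y $ i $ j * Y y $ i * Y y $ j) k x)"
        unfolding e by (rule pd_sum) (auto simp: hdx Ydx)
      also have "\<dots> = (\<Sum>i\<in>UNIV. \<Sum>j\<in>UNIV. pd (\<lambda>y. h y $ i $ j * Y y $ i * Y y $ j) k x)"
        by (intro sum.cong refl pd_sum) (auto simp: hdx Ydx)
      also have "\<dots> = (\<Sum>i\<in>UNIV. \<Sum>j\<in>UNIV. dh k i j * Y x $ i * Y x $ j
        + h x $ i $ j * dY k i * Y x $ j + h x $ i $ j * Y x $ i * dY k j)"
        by (intro sum.cong refl) (simp add: pd_mult hdx Ydx dh_def dY_def algebra_simps)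
      finally show ?thesis .
    qed
    have Ex: "EE x i j = lower h Y x i * lower h Y x j - sqnorm h Y x / nn * h x $ i $ j" for i j
      by (simp add: EE_def)
    have dE: "pd (\<lambda>y. EE y i j) k x = pd (\<lambda>y. lower h Y y i) k x * lower h Y x j
        + lower h Y x i * pd (\<lambda>y. lower h Y y j) k x
        - (pd (sqnorm h Y) k x / nn * h x $ i $ j + sqnorm h Y x / nn * dh k i j)" for k i j
      unfolding EE_def dh_def using nn
      by (simp add: pd_diff pd_mult pd_cdiv Ldx hdx fdx add_divide_distrib)
    have dphi: "pd phi k x = phi x * (pd (sqnorm h Y) k x * a / sqnorm h Y x)" for k
      unfolding phi_def by (rule pd_powr[OF fdx fpos[OF x]])
    have cov: "cov2 h (Dtensor h Y) x k i j = pd phi k x * EE x i j + phi x * pd (\<lambda>y. EE y i j) k x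
        - (\<Sum>l\<in>UNIV. christoffel h x l k i * (phi x * EE x l j))
        - (\<Sum>l\<in>UNIV. christoffel h x l k j * (phi x * EE x i l))" for k i j
    proof -
      have "pd (\<lambda>y. Dtensor h Y y i j) k x = pd (\<lambda>y. phi y * EE y i j) k x"
        by (rule pd_cong[OF assms(1) x]) (rule Dloc)
      also have "\<dots> = pd phi k x * EE x i j + phi x * pd (\<lambda>y. EE y i j) k x"
        by (rule pd_mult[OF phid[OF x] EEd[OF x]])
      finally show ?thesis unfolding cov2_def using Dloc[OF x] by simp
    qed
    have dv: "divergence h (Dtensor h Y) x i = (\<Sum>j\<in>UNIV. \<Sum>k\<in>UNIV. hinv h x j k * cov2 h (Dtensor h Y) x k i j)" for i
      by (simp add: divergence_def)
    have N: "cov1 h (lower h Y) x i j = pd (\<lambda>y. lower h Y y j) i x - (\<Sum>k\<in>UNIV. christoffel h x k i j * lower h Y x k)" for i j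
      by (simp add: cov1_def)
    have S: "symcov h Y x i j = (cov1 h (lower h Y) x i j + cov1 h (lower h Y) x j i) / 2" for i j
      by (simp add: symcov_def)
    have tr: "htrace h x (symcov h Y x) = (\<Sum>i\<in>UNIV. \<Sum>j\<in>UNIV. hinv h x i j * symcov h Y x i j)"
      by (simp add: htrace_def)
    have C: "(\<Sum>j\<in>UNIV. Y x $ j * tracefree h x (symcov h Y x) i j)
       = (\<Sum>j\<in>UNIV. Y x $ j * (symcov h Y x i j - htrace h x (symcov h Y x) / nn * h x $ i $ j))" for i
      by (simp add: tracefree_def nn_def)
    have fnz: "sqnorm h Y x \<noteq> 0" using fpos[OF x] by simp
    have phinz: "phi x \<noteq> 0" using fpos[OF x] unfolding phi_def by simp
    show ?thesis
      by (rule main_alg[where g="\<lambda>i j. h x $ i $ j" and G="hinv h x" and dh=dh and Gam="christoffel h x"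
          and L="lower h Y x" and Y="\<lambda>j. Y x $ j" and f="sqnorm h Y x" and dL="\<lambda>k j. pd (\<lambda>y. lower h Y y j) k x"
          and dY=dY and df="\<lambda>k. pd (sqnorm h Y) k x" and E="EE x" and nn=nn and dE="\<lambda>k i j. pd (\<lambda>y. EE y i j) k x"
          and dphi="\<lambda>k. pd phi k x" and phi="phi x" and s=a and cov="cov2 h (Dtensor h Y) x"
          and dv="divergence h (Dtensor h Y) x" and N="cov1 h (lower h Y) x" and S="symcov h Y x"
          and tr="htrace h x (symcov h Y x)" and C="\<lambda>i. \<Sum>j\<in>UNIV. Y x $ j * tracefree h x (symcov h Y x) i j",
          OF mi(1) mi(2) mi(4) mi(3) dhs Gam Lx fx dL df Ex dE dphi a_def cov dv N S tr C fnz phinz nn])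
  qed
  have symtr: "(\<forall>i j. Dtensor h Y x i j = Dtensor h Y x j i) \<and> htrace h x (Dtensor h Y x) = 0"
    if x: "x \<in> U" for x
  proof
    note mi = metric_inv[OF assms(2) x]
    show "\<forall>i j. Dtensor h Y x i j = Dtensor h Y x j i"
      using mi(4) by (simp add: Dloc[OF x] EE_def mult.commute)
    have GG: "(\<Sum>i\<in>UNIV. \<Sum>j\<in>UNIV. hinv h x i j * h x $ i $ j) = nn"
    proof -
      have "(\<Sum>i\<in>UNIV. \<Sum>j\<in>UNIV. hinv h x i j * h x $ i $ j) = (\<Sum>i\<in>UNIV. \<Sum>j\<in>UNIV. hinv h x i j * h x $ j $ i)"
        using mi(4) by simp
      also have "\<dots> = (\<Sum>i\<in>(UNIV::'n set). 1)" using mi(2) by simp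
      finally show ?thesis by (simp add: nn_def dimn_def)
    qed
    have "htrace h x (Dtensor h Y x) = phi x * (htrace h x (\<lambda>a b. lower h Y x a * lower h Y x b)
        - sqnorm h Y x / nn * (\<Sum>i\<in>UNIV. \<Sum>j\<in>UNIV. hinv h x i j * h x $ i $ j))"
      unfolding htrace_def by (simp add: Dloc[OF x] EE_def sum_distrib_left right_diff_distrib sum_subtractf mult_ac)
    then show "htrace h x (Dtensor h Y x) = 0"
      using GG nn by (simp add: htrace_LL[OF assms(2) x])
  qed
  show ?thesis unfolding TT_on_def using pointwise symtr by blast
qed


end
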